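(* Assume (A1) and (A5). Then: (1) For every $1\le i\le n$ and all $\xi,\eta\in\mathscr C$ with $\xi^i(0)-D^i(\xi)=\eta^i(0)-D^i(\eta)$, there exists $\zeta\in\mathscr C$ with $\zeta\le\xi\wedge\eta$ and $\zeta^i(0)-D^i(\zeta)=\xi^i(0)-D^i(\xi)=\eta^i(0)-D^i(\eta)$. (2) For all $\mu,\nu\in\mathscr P_2(\mathscr C)$ there exists $\tilde\mu\in\mathscr P_2(\mathscr C)$ with $\tilde\mu\le_D\mu$ and $\tilde\mu\le_D\nu$.
   Context: Fix $n\ge1$, $r_0>0$, $\mathscr C=C([-r_0,0];\mathbb R^n)$ with $\|h\|_\infty=\sup_\theta|h(\theta)|$; $\mathscr P_2(\mathscr C)$ the probability measures on $\mathscr C$ with finite second moment of $\|\cdot\|_\infty$. $D:\mathscr C\to\mathbb R^n$; superscript $i$ denotes the $i$-th coordinate. Order: for $\xi,\eta\in\mathscr C$, $\xi\le\eta$ iff $\xi(\theta)\le\eta(\theta)$ coordinatewise for all $\theta\in[-r_0,0]$; $(\xi\wedge\eta)_i=\xi_i\wedge\eta_i$ pointwise; $\xi\le_D\eta$ iff $\xi\le\eta$ and $\xi(0)-D(\xi)\le\eta(0)-D(\eta)$ (coordinatewise in $\mathbb R^n$). $f:\mathscr C\to\mathbb R$ is $D$-increasing if $\xi\le_D\eta\Rightarrow f(\xi)\le f(\eta)$; for probability measures, $\mu\le_D\nu$ iff $\mu(f)\le\nu(f)$ for all bounded measurable $D$-increasing $f$. (A1) $D(0)=0$ and $D(\xi)\ge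 D(\eta)$ whenever $\xi\ge\eta$. (A5) There is $\kappa\in(0,1)$ with $|D(\xi)-D(\eta)|\le\kappa\max_{1\le i\le n}\|\xi^i-\eta^i\|_\infty$. *)

theory Defs
  imports "HOL-Probability.Probability"
begin

definition Cspace :: "real \<Rightarrow> (real \<Rightarrow> real^'n) set" where
  "Cspace r0 = {f. continuous_on {-r0..0} f \<and> (\<forall>\<theta>. \<theta> \<notin> {-r0..0} \<longrightarrow> f \<theta> = 0)}"

definition supnorm :: "real \<Rightarrow> (real \<Rightarrow> real^'n) \<Rightarrow> real" where
  "supnorm r0 f = (SUP \<theta>\<in>{-r0..0}. norm (f \<theta>))"

definition supnorm_coord :: "real \<Rightarrow> 'n \<Rightarrow> (real \<Rightarrow> real^'n) \<Rightarrow> real" where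
  "supnorm_coord r0 i f = (SUP \<theta>\<in>{-r0..0}. \<bar>f \<theta> $ i\<bar>)"

definition Copen :: "real \<Rightarrow> (real \<Rightarrow> real^'n) set set" where
  "Copen r0 = {U. U \<subseteq> Cspace r0 \<and>
      (\<forall>f\<in>U. \<exists>e>0. {g \<in> Cspace r0. supnorm r0 (\<lambda>\<theta>. g \<theta> - f \<theta>) < e} \<subseteq> U)}"

definition Cborel :: "real \<Rightarrow> (real \<Rightarrow> real^'n) measure" where
  "Cborel r0 = sigma (Cspace r0) (Copen r0)"

definition P2 :: "real \<Rightarrow> (real \<Rightarrow> real^'n) measure set" where
  "P2 r0 = {\<mu>. prob_space \<mu> \<and> sets \<mu> = sets (Cborel r0) \<and>
              (\<integral>\<^sup>+ f. ennreal ((supnorm r0 f)\<^sup>2) \<partial>\<mu>) < \<infinity>}"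

definition Cle :: "real \<Rightarrow> (real \<Rightarrow> real^'n) \<Rightarrow> (real \<Rightarrow> real^'n) \<Rightarrow> bool" where
  "Cle r0 \<xi> \<eta> = (\<forall>\<theta>\<in>{-r0..0}. \<forall>i. \<xi> \<theta> $ i \<le> \<eta> \<theta> $ i)"

definition Cmin :: "(real \<Rightarrow> real^'n) \<Rightarrow> (real \<Rightarrow> real^'n) \<Rightarrow> (real \<Rightarrow> real^'n)" where
  "Cmin \<xi> \<eta> = (\<lambda>\<theta>. \<chi> i. min (\<xi> \<theta> $ i) (\<eta> \<theta> $ i))"

definition Dle :: "((real \<Rightarrow> real^'n) \<Rightarrow> real^'n) \<Rightarrow> real \<Rightarrow>
    (real \<Rightarrow> real^'n) \<Rightarrow> (real \<Rightarrow> real^'n) \<Rightarrow> bool" where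
  "Dle D r0 \<xi> \<eta> = (Cle r0 \<xi> \<eta> \<and> (\<forall>i. \<xi> 0 $ i - D \<xi> $ i \<le> \<eta> 0 $ i - D \<eta> $ i))"

definition D_increasing :: "((real \<Rightarrow> real^'n) \<Rightarrow> real^'n) \<Rightarrow> real \<Rightarrow>
    ((real \<Rightarrow> real^'n) \<Rightarrow> real) \<Rightarrow> bool" where
  "D_increasing D r0 f = (\<forall>\<xi>\<in>Cspace r0. \<forall>\<eta>\<in>Cspace r0. Dle D r0 \<xi> \<eta> \<longrightarrow> f \<xi> \<le> f \<eta>)"

definition Dle_meas :: "((real \<Rightarrow> real^'n) \<Rightarrow> real^'n) \<Rightarrow> real \<Rightarrow>
    (real \<Rightarrow> real^'n) measure \<Rightarrow> (real \<Rightarrow> real^'n) measure \<Rightarrow> bool" where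
  "Dle_meas D r0 \<mu> \<nu> = (\<forall>f. f \<in> borel_measurable (Cborel r0) \<longrightarrow>
      (\<exists>c. \<forall>x\<in>Cspace r0. \<bar>f x\<bar> \<le> c) \<longrightarrow> D_increasing D r0 f \<longrightarrow>
      (\<integral>x. f x \<partial>\<mu>) \<le> (\<integral>x. f x \<partial>\<nu>))"

definition A1 :: "((real \<Rightarrow> real^'n) \<Rightarrow> real^'n) \<Rightarrow> real \<Rightarrow> bool" where
  "A1 D r0 = (D (\<lambda>_. 0) = 0 \<and>
     (\<forall>\<xi>\<in>Cspace r0. \<forall>\<eta>\<in>Cspace r0. Cle r0 \<eta> \<xi> \<longrightarrow> (\<forall>i. D \<eta> $ i \<le> D \<xi> $ i)))"

definition A5 :: "((real \<Rightarrow> real^'n) \<Rightarrow> real^'n) \<Rightarrow> real \<Rightarrow> bool" where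
  "A5 D r0 = (\<exists>\<kappa>. 0 < \<kappa> \<and> \<kappa> < 1 \<and>
     (\<forall>\<xi>\<in>Cspace r0. \<forall>\<eta>\<in>Cspace r0.
        norm (D \<xi> - D \<eta>) \<le> \<kappa> * (MAX i\<in>UNIV. supnorm_coord r0 i (\<lambda>\<theta>. \<xi> \<theta> - \<eta> \<theta>))))"

end

theory Submission
  imports Defs
begin


lemma Cspace_bdd:
  assumes "f \<in> Cspace r0"
  shows "bdd_above ((\<lambda>\<theta>. norm (f \<theta>)) ` {-r0..0})"
proof -
  have "continuous_on {-r0..0} f" using assms by (simp add: Cspace_def)
  then have "compact (f ` {-r0..0})" by (intro compact_continuous_image) auto
  then have "bounded (f ` {-r0..0})" by (rule compact_imp_bounded)
  then obtain B where "\<forall>x\<in>f ` {-r0..0}. norm x \<le> B" by (auto simp: bounded_iff)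
  then show ?thesis by (auto simp: bdd_above_def)
qed

lemma supnorm_ge:
  assumes "f \<in> Cspace r0" "\<theta> \<in> {-r0..0}"
  shows "norm (f \<theta>) \<le> supnorm r0 f"
  unfolding supnorm_def using Cspace_bdd[OF assms(1)] assms(2) by (rule cSUP_upper2) auto

lemma supnorm_nonneg:
  assumes "f \<in> Cspace r0" "r0 \<ge> 0"
  shows "0 \<le> supnorm r0 f"
  using supnorm_ge[OF assms(1), of 0] assms(2) by (meson atLeastAtMost_iff neg_le_0_iff_le norm_ge_zero order.trans order_refl)

lemma coord_le_supnorm:
  assumes "f \<in> Cspace r0" "\<theta> \<in> {-r0..0}"
  shows "\<bar>f \<theta> $ j\<bar> \<le> supnorm r0 f"
  using supnorm_ge[OF assms] component_le_norm_cart order_trans by blast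

lemma D_lip:
  fixes D :: "(real \<Rightarrow> real^'n) \<Rightarrow> real^'n"
  assumes "A5 D r0" "r0 \<ge> 0"
  obtains \<kappa> where "0 < \<kappa>" "\<kappa> < 1"
    "\<And>\<xi> \<eta> B. \<xi> \<in> Cspace r0 \<Longrightarrow> \<eta> \<in> Cspace r0 \<Longrightarrow>
       (\<forall>\<theta>\<in>{-r0..0}. \<forall>j. \<bar>\<xi> \<theta> $ j - \<eta> \<theta> $ j\<bar> \<le> B) \<Longrightarrow> norm (D \<xi> - D \<eta>) \<le> \<kappa> * B"
proof -
  obtain \<kappa> where k: "0 < \<kappa>" "\<kappa> < 1" and L: "\<forall>\<xi>\<in>Cspace r0. \<forall>\<eta>\<in>Cspace r0.
        norm (D \<xi> - D \<eta>) \<le> \<kappa> * (MAX i\<in>UNIV. supnorm_coord r0 i (\<lambda>\<theta>. \<xi> \<theta> - \<eta> \<theta>))"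
    using assms(1) by (auto simp: A5_def)
  show ?thesis
  proof (rule that[OF k])
    fix \<xi> \<eta> :: "real \<Rightarrow> real^'n" and B :: real assume x: "\<xi> \<in> Cspace r0" and y: "\<eta> \<in> Cspace r0"
      and b: "\<forall>\<theta>\<in>{-r0..0}. \<forall>j. \<bar>\<xi> \<theta> $ j - \<eta> \<theta> $ j\<bar> \<le> B"
    have "supnorm_coord r0 j (\<lambda>\<theta>. \<xi> \<theta> - \<eta> \<theta>) \<le> B" for j
      unfolding supnorm_coord_def using b assms(2) by (intro cSUP_least) auto
    then have "(MAX i\<in>UNIV. supnorm_coord r0 i (\<lambda>\<theta>. \<xi> \<theta> - \<eta> \<theta>)) \<le> B"
      by (subst Max_le_iff) auto
    then show "norm (D \<xi> - D \<eta>) \<le> \<kappa> * B"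
      using L x y k by (meson less_eq_real_def mult_left_mono order_trans)
  qed
qed

definition shift :: "real \<Rightarrow> (real \<Rightarrow> real^'n) \<Rightarrow> real \<Rightarrow> (real \<Rightarrow> real^'n)" where
  "shift r0 m t = (\<lambda>\<theta>. if \<theta> \<in> {-r0..0} then m \<theta> - (\<chi> j. t) else 0)"

lemma shift_Cspace: "m \<in> Cspace r0 \<Longrightarrow> shift r0 m t \<in> Cspace r0"
  unfolding Cspace_def shift_def
  by (auto intro!: continuous_on_diff continuous_on_const
      intro: continuous_on_cong[THEN iffD1, rotated])

lemma shift_0: "m \<in> Cspace r0 \<Longrightarrow> shift r0 m 0 = m"
  unfolding Cspace_def shift_def by (auto simp: vec_eq_iff)

lemma Cmin_Cspace: "\<xi> \<in> Cspace r0 \<Longrightarrow> \<eta> \<in> Cspace r0 \<Longrightarrow> Cmin \<xi> \<eta> \<in> Cspace r0"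
  unfolding Cspace_def Cmin_def
  by (auto simp: vec_eq_iff intro!: continuous_on_vec_lambda continuous_on_min continuous_on_component)

lemma part1:
  fixes D :: "(real \<Rightarrow> real^'n) \<Rightarrow> real^'n"
  assumes r0: "r0 > 0" and a1: "A1 D r0" and a5: "A5 D r0"
    and x: "\<xi> \<in> Cspace r0" and y: "\<eta> \<in> Cspace r0"
    and eq: "\<xi> 0 $ i - D \<xi> $ i = \<eta> 0 $ i - D \<eta> $ i"
  shows "\<exists>\<zeta>\<in>Cspace r0. Cle r0 \<zeta> (Cmin \<xi> \<eta>) \<and>
               \<zeta> 0 $ i - D \<zeta> $ i = \<xi> 0 $ i - D \<xi> $ i \<and>
               \<zeta> 0 $ i - D \<zeta> $ i = \<eta> 0 $ i - D \<eta> $ i"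
proof -
  obtain \<kappa> where k: "0 < \<kappa>" "\<kappa> < 1" and L: "\<And>\<xi> \<eta> B. \<xi> \<in> Cspace r0 \<Longrightarrow> \<eta> \<in> Cspace r0 \<Longrightarrow>
       (\<forall>\<theta>\<in>{-r0..0}. \<forall>j. \<bar>\<xi> \<theta> $ j - \<eta> \<theta> $ j\<bar> \<le> B) \<Longrightarrow> norm (D \<xi> - D \<eta>) \<le> \<kappa> * B"
    using D_lip[OF a5] r0 by (metis less_imp_le)
  define m where "m = Cmin \<xi> \<eta>"
  have m: "m \<in> Cspace r0" unfolding m_def using Cmin_Cspace[OF x y] .
  define c where "c = \<xi> 0 $ i - D \<xi> $ i"
  define h where "h t = shift r0 m t 0 $ i - D (shift r0 m t) $ i" for t
  have z0: "(0::real) \<in> {-r0..0}" using r0 by auto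
  have hval: "h t = m 0 $ i - t - D (shift r0 m t) $ i" for t
    using z0 unfolding h_def shift_def by simp
  have Dsh: "\<bar>D (shift r0 m t) $ i - D (shift r0 m s) $ i\<bar> \<le> \<kappa> * \<bar>t - s\<bar>" for t s
  proof -
    have "norm (D (shift r0 m t) - D (shift r0 m s)) \<le> \<kappa> * \<bar>t - s\<bar>"
      by (rule L[OF shift_Cspace[OF m] shift_Cspace[OF m]]) (auto simp: shift_def)
    moreover have "\<bar>(D (shift r0 m t) - D (shift r0 m s)) $ i\<bar> \<le> norm (D (shift r0 m t) - D (shift r0 m s))"
      by (rule component_le_norm_cart)
    ultimately show ?thesis by simp
  qed
  have h0: "h 0 \<ge> c"
  proof (cases "\<xi> 0 $ i \<le> \<eta> 0 $ i")
    case True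
    have "Cle r0 m \<xi>" unfolding m_def Cle_def Cmin_def by auto
    then have "D m $ i \<le> D \<xi> $ i" using a1 m x unfolding A1_def by blast
    moreover have "m 0 $ i = \<xi> 0 $ i" using True unfolding m_def Cmin_def by auto
    ultimately show ?thesis unfolding h_def c_def shift_0[OF m] by simp
  next
    case False
    have "Cle r0 m \<eta>" unfolding m_def Cle_def Cmin_def by auto
    then have "D m $ i \<le> D \<eta> $ i" using a1 m y unfolding A1_def by blast
    moreover have "m 0 $ i = \<eta> 0 $ i" using False unfolding m_def Cmin_def by auto
    ultimately show ?thesis unfolding h_def c_def shift_0[OF m] using eq by simp
  qed
  define T where "T = (h 0 - c) / (1 - \<kappa>)"
  have T0: "T \<ge> 0" unfolding T_def using h0 k by auto
  have hT: "h T \<le> c"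
  proof -
    have "D (shift r0 m 0) $ i - D (shift r0 m T) $ i \<le> \<kappa> * T" using Dsh[of 0 T] T0 by simp
    then have "h T \<le> h 0 - (1 - \<kappa>) * T" unfolding hval by (simp add: algebra_simps)
    also have "(1 - \<kappa>) * T = h 0 - c" unfolding T_def using k by simp
    finally show ?thesis by simp
  qed
  have cont: "continuous_on {0..T} h"
  proof -
    have "lipschitz_on (1 + \<kappa>) {0..T} h"
    proof (rule lipschitz_onI)
      fix s t assume "s \<in> {0..T}" "t \<in> {0..T}"
      have "\<bar>h s - h t\<bar> \<le> \<bar>s - t\<bar> + \<bar>D (shift r0 m s) $ i - D (shift r0 m t) $ i\<bar>"
        unfolding hval by simp
      also have "\<dots> \<le> (1 + \<kappa>) * \<bar>s - t\<bar>" using Dsh[of s t] by (simp add: algebra_simps)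
      finally show "dist (h s) (h t) \<le> (1 + \<kappa>) * dist s t" by (simp add: dist_real_def)
    qed (use k in simp)
    then show ?thesis by (rule lipschitz_on_continuous_on)
  qed
  obtain t where t: "0 \<le> t" "t \<le> T" "h t = c" using IVT2'[of h T c 0, OF hT h0 T0 cont] by blast
  show ?thesis
  proof (intro bexI conjI)
    show "shift r0 m t \<in> Cspace r0" by (rule shift_Cspace[OF m])
    show "Cle r0 (shift r0 m t) (Cmin \<xi> \<eta>)" using t(1) unfolding Cle_def shift_def m_def by auto
    show "shift r0 m t 0 $ i - D (shift r0 m t) $ i = \<xi> 0 $ i - D \<xi> $ i"
      using t(3) unfolding h_def c_def .
    then show "shift r0 m t 0 $ i - D (shift r0 m t) $ i = \<eta> 0 $ i - D \<eta> $ i" using eq by simp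
  qed
qed



lemma Copen_Pow: "Copen r0 \<subseteq> Pow (Cspace r0)" unfolding Copen_def by auto

lemma space_Cborel[simp]: "space (Cborel r0) = Cspace r0"
  unfolding Cborel_def by (rule space_measure_of_conv)

lemma Copen_sets: "U \<in> Copen r0 \<Longrightarrow> U \<in> sets (Cborel r0)"
  unfolding Cborel_def sets_measure_of[OF Copen_Pow] by auto

lemma Cspace_diff: "f \<in> Cspace r0 \<Longrightarrow> g \<in> Cspace r0 \<Longrightarrow> (\<lambda>\<theta>. g \<theta> - f \<theta>) \<in> Cspace r0"
  unfolding Cspace_def by (auto intro!: continuous_on_diff)

lemma supnorm_triangle:
  assumes "f \<in> Cspace r0" "g \<in> Cspace r0" "r0 \<ge> 0"
  shows "supnorm r0 g \<le> supnorm r0 f + supnorm r0 (\<lambda>\<theta>. g \<theta> - f \<theta>)"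
  unfolding supnorm_def[of r0 g]
proof (rule cSUP_least)
  show "{-r0..0} \<noteq> {}" using assms by auto
  fix \<theta> assume t: "\<theta> \<in> {-r0..0}"
  have "norm (g \<theta>) \<le> norm (f \<theta>) + norm (g \<theta> - f \<theta>)" by (metis norm_triangle_sub add.commute)
  also have "\<dots> \<le> supnorm r0 f + supnorm r0 (\<lambda>\<theta>. g \<theta> - f \<theta>)"
    using supnorm_ge[OF assms(1) t] supnorm_ge[OF Cspace_diff[OF assms(1,2)] t] by simp
  finally show "norm (g \<theta>) \<le> supnorm r0 f + supnorm r0 (\<lambda>\<theta>. g \<theta> - f \<theta>)" .
qed

lemma supnorm_measurable:
  assumes "sets M = sets (Cborel r0)" "r0 \<ge> 0"
  shows "supnorm r0 \<in> borel_measurable M"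
proof -
  have sp: "space M = Cspace r0" using sets_eq_imp_space_eq[OF assms(1)] by simp
  have "{w \<in> Cspace r0. supnorm r0 w < a} \<in> Copen r0" for a
  proof -
    have "\<exists>e>0. {g \<in> Cspace r0. supnorm r0 (\<lambda>\<theta>. g \<theta> - f \<theta>) < e} \<subseteq> {w \<in> Cspace r0. supnorm r0 w < a}"
      if f: "f \<in> Cspace r0" "supnorm r0 f < a" for f
      using f supnorm_triangle[OF f(1) _ assms(2)]
      by (intro exI[of _ "a - supnorm r0 f"]) force
    then show ?thesis unfolding Copen_def by blast
  qed
  then show ?thesis unfolding borel_measurable_iff_less sp assms(1) by (auto intro: Copen_sets)
qed

definition low :: "real \<Rightarrow> real \<Rightarrow> real \<Rightarrow> (real \<Rightarrow> real^'n)" where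
  "low r0 K R = shift r0 (\<lambda>_. 0) (K * R)"

lemma zero_Cspace: "(\<lambda>_. 0) \<in> Cspace r0" unfolding Cspace_def by auto

lemma low_Cspace: "low r0 K R \<in> Cspace r0"
  unfolding low_def by (rule shift_Cspace[OF zero_Cspace])

lemma supnorm_low_diff:
  assumes "r0 \<ge> 0"
  shows "supnorm r0 (\<lambda>\<theta>. (low r0 K R' :: real \<Rightarrow> real^'n) \<theta> - low r0 K R \<theta>) \<le> real CARD('n) * \<bar>K\<bar> * \<bar>R' - R\<bar>"
  unfolding supnorm_def
proof (rule cSUP_least)
  show "{-r0..0} \<noteq> {}" using assms by auto
  fix \<theta> assume t: "\<theta> \<in> {-r0..0}"
  have "norm ((low r0 K R' :: real \<Rightarrow> real^'n) \<theta> - low r0 K R \<theta>) \<le> (\<Sum>i\<in>UNIV. \<bar>((low r0 K R' :: real \<Rightarrow> real^'n) \<theta> - low r0 K R \<theta>) $ i\<bar>)"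
    by (rule norm_le_l1_cart)
  also have "\<dots> = real CARD('n) * \<bar>K * R - K * R'\<bar>" using t by (simp add: low_def shift_def)
  also have "\<dots> = real CARD('n) * \<bar>K\<bar> * \<bar>R' - R\<bar>" by (simp add: abs_mult[symmetric] algebra_simps)
  finally show "norm ((low r0 K R' :: real \<Rightarrow> real^'n) \<theta> - low r0 K R \<theta>) \<le> real CARD('n) * \<bar>K\<bar> * \<bar>R' - R\<bar>" .
qed

lemma low_measurable:
  assumes "r0 \<ge> 0"
  shows "(low r0 K :: real \<Rightarrow> real \<Rightarrow> real^'n) \<in> measurable borel (Cborel r0)"
  unfolding Cborel_def
proof (rule measurable_measure_of[OF Copen_Pow])
  show "low r0 K \<in> space borel \<rightarrow> Cspace r0" using low_Cspace by auto
  fix U :: "(real \<Rightarrow> real^'n) set" assume U: "U \<in> Copen r0"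
  have "open {R. (low r0 K R :: real \<Rightarrow> real^'n) \<in> U}"
    unfolding open_dist
  proof safe
    fix R assume "(low r0 K R :: real \<Rightarrow> real^'n) \<in> U"
    then obtain e where e: "e > 0" and sub: "{g \<in> Cspace r0. supnorm r0 (\<lambda>\<theta>. g \<theta> - low r0 K R \<theta>) < e} \<subseteq> U"
      using U unfolding Copen_def by blast
    define C where "C = real CARD('n) * \<bar>K\<bar>"
    have C0: "C \<ge> 0" unfolding C_def by simp
    show "\<exists>d>0. \<forall>y. dist y R < d \<longrightarrow> y \<in> {R. (low r0 K R :: real \<Rightarrow> real^'n) \<in> U}"
    proof (intro exI[of _ "e / (C + 1)"] conjI allI impI)
      show "0 < e / (C + 1)" using e C0 by simp
      fix y assume "dist y R < e / (C + 1)"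
      then have d: "\<bar>y - R\<bar> * (C + 1) < e" using C0 by (simp add: dist_real_def field_simps)
      have "supnorm r0 (\<lambda>\<theta>. (low r0 K y :: real \<Rightarrow> real^'n) \<theta> - low r0 K R \<theta>) \<le> C * \<bar>y - R\<bar>"
        using supnorm_low_diff[OF assms] unfolding C_def by blast
      also have "\<dots> < e" using d by (smt (verit, best) mult_nonneg_nonneg abs_ge_zero distrib_left mult.commute mult_1_right)
      finally show "y \<in> {R. (low r0 K R :: real \<Rightarrow> real^'n) \<in> U}" using sub low_Cspace by blast
    qed
  qed
  then show "low r0 K -` U \<inter> space borel \<in> sets borel" by (simp add: vimage_def borel_open)
qed

lemma low_Dle:
  fixes D :: "(real \<Rightarrow> real^'n) \<Rightarrow> real^'n"
  assumes r0: "r0 \<ge> 0" and k: "0 < \<kappa>" "\<kappa> < 1"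
    and L: "\<And>\<xi> \<eta> B. \<xi> \<in> Cspace r0 \<Longrightarrow> \<eta> \<in> Cspace r0 \<Longrightarrow>
       (\<forall>\<theta>\<in>{-r0..0}. \<forall>j. \<bar>\<xi> \<theta> $ j - \<eta> \<theta> $ j\<bar> \<le> B) \<Longrightarrow> norm (D \<xi> - D \<eta>) \<le> \<kappa> * B"
    and x: "\<xi> \<in> Cspace r0" and R: "supnorm r0 \<xi> \<le> R"
  shows "Dle D r0 (low r0 ((1 + \<kappa>) / (1 - \<kappa>)) R) \<xi>"
proof -
  define K where "K = (1 + \<kappa>) / (1 - \<kappa>)"
  have K1: "K \<ge> 1" unfolding K_def using k by (simp add: field_simps)
  have R0: "R \<ge> 0" using supnorm_nonneg[OF x r0] R by simp
  have co: "\<bar>\<xi> \<theta> $ j\<bar> \<le> R" if "\<theta> \<in> {-r0..0}" for \<theta> j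
    using coord_le_supnorm[OF x that, of j] R by linarith
  have lv: "low r0 K R \<theta> $ j = - (K * R)" if "\<theta> \<in> {-r0..0}" for \<theta> j
    using that by (simp add: low_def shift_def)
  have z0: "(0::real) \<in> {-r0..0}" using r0 by auto
  have KR: "0 \<le> K * R" using K1 R0 by simp
  have cle: "Cle r0 (low r0 K R) \<xi>"
    unfolding Cle_def
  proof (intro ballI allI)
    fix \<theta> j assume t: "\<theta> \<in> {-r0..0}"
    have "R \<le> K * R" using K1 R0 by (simp add: mult_right_mono[of 1 K R, simplified])
    then show "low r0 K R \<theta> $ j \<le> \<xi> \<theta> $ j" using lv[of \<theta> j, OF t] co[of \<theta> j, OF t] by linarith
  qed
  have "norm (D \<xi> - D (low r0 K R)) \<le> \<kappa> * (R + K * R)"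
  proof (rule L[OF x low_Cspace], intro ballI allI)
    fix \<theta> j assume t: "\<theta> \<in> {-r0..0}"
    show "\<bar>\<xi> \<theta> $ j - low r0 K R \<theta> $ j\<bar> \<le> R + K * R"
      using lv[of \<theta> j, OF t] co[of \<theta> j, OF t] KR by (auto simp add: abs_le_iff)
  qed
  then have Di: "D \<xi> $ i - D (low r0 K R) $ i \<le> \<kappa> * (R + K * R)" for i
    using component_le_norm_cart[of "D \<xi> - D (low r0 K R)" i] by simp
  have eqK: "\<kappa> * (R + K * R) = K * R - R"
  proof -
    have "K * (1 - \<kappa>) = 1 + \<kappa>" unfolding K_def using k by simp
    then have "\<kappa> + \<kappa> * K = K - 1" by (simp add: algebra_simps)
    then have "(\<kappa> + \<kappa> * K) * R = (K - 1) * R" by simp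
    then show ?thesis by (simp add: algebra_simps)
  qed
  have "low r0 K R 0 $ i - D (low r0 K R) $ i \<le> \<xi> 0 $ i - D \<xi> $ i" for i
    using Di[of i] eqK lv[of 0 i, OF z0] co[of 0 i, OF z0] by linarith
  then show ?thesis using cle unfolding Dle_def K_def by blast
qed



lemma distr_pair_snd':
  assumes "prob_space M" "prob_space N"
  shows "distr (M \<Otimes>\<^sub>M N) N snd = N"
proof (intro measure_eqI)
  interpret M: prob_space M by fact
  interpret N: prob_space N by fact
  fix A assume A: "A \<in> sets (distr (M \<Otimes>\<^sub>M N) N snd)"
  from A have "emeasure (distr (M \<Otimes>\<^sub>M N) N snd) A = emeasure (M \<Otimes>\<^sub>M N) (space M \<times> A)"
    by (auto simp add: emeasure_distr space_pair_measure dest: sets.sets_into_space intro!: arg_cong2[where f=emeasure])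
  with A show "emeasure (distr (M \<Otimes>\<^sub>M N) N snd) A = emeasure N A"
    by (simp add: N.emeasure_pair_measure_Times M.emeasure_space_1)
qed simp

lemma marginal_Dle:
  fixes D :: "(real \<Rightarrow> real^'n) \<Rightarrow> real^'n"
  assumes P: "prob_space P" and G: "G \<in> measurable P (Cborel r0)" and pi: "\<pi> \<in> measurable P M"
    and dM: "distr P M \<pi> = M" and sM: "sets M = sets (Cborel r0)"
    and le: "\<forall>p\<in>space P. Dle D r0 (G p) (\<pi> p)"
  shows "Dle_meas D r0 (distr P (Cborel r0) G) M"
  unfolding Dle_meas_def
proof (intro allI impI)
  interpret prob_space P by (rule P)
  fix f assume fm: "f \<in> borel_measurable (Cborel r0)" and "\<exists>c. \<forall>x\<in>Cspace r0. \<bar>f x\<bar> \<le> c"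
    and inc: "D_increasing D r0 f"
  then obtain c where c: "\<forall>x\<in>Cspace r0. \<bar>f x\<bar> \<le> c" by blast
  have spM: "space M = Cspace r0" using sets_eq_imp_space_eq[OF sM] by simp
  have fM: "f \<in> borel_measurable M" unfolding measurable_cong_sets[OF sM refl] by (rule fm)
  have Gs: "G p \<in> Cspace r0" if "p \<in> space P" for p using measurable_space[OF G that] by simp
  have ps: "\<pi> p \<in> Cspace r0" if "p \<in> space P" for p using measurable_space[OF pi that] spM by simp
  have int1: "integrable P (\<lambda>p. f (G p))"
    by (rule integrable_const_bound[where B=c]) (use c Gs in \<open>auto intro!: AE_I2 measurable_compose[OF G fm]\<close>)
  have int2: "integrable P (\<lambda>p. f (\<pi> p))"
    by (rule integrable_const_bound[where B=c]) (use c ps in \<open>auto intro!: AE_I2 measurable_compose[OF pi fM]\<close>)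
  have "(\<integral>x. f x \<partial>distr P (Cborel r0) G) = (\<integral>p. f (G p) \<partial>P)" by (rule integral_distr[OF G fm])
  also have "\<dots> \<le> (\<integral>p. f (\<pi> p) \<partial>P)"
    by (rule integral_mono[OF int1 int2]) (use inc le Gs ps in \<open>auto simp: D_increasing_def\<close>)
  also have "\<dots> = (\<integral>x. f x \<partial>distr P M \<pi>)" by (rule integral_distr[OF pi fM, symmetric])
  also have "\<dots> = (\<integral>x. f x \<partial>M)" using dM by simp
  finally show "(\<integral>x. f x \<partial>distr P (Cborel r0) G) \<le> (\<integral>x. f x \<partial>M)" .
qed

lemma part2:
  fixes D :: "(real \<Rightarrow> real^'n) \<Rightarrow> real^'n" and \<mu> \<nu> :: "(real \<Rightarrow> real^'n) measure"
  assumes r0: "r0 > 0" and a5: "A5 D r0" and mu: "\<mu> \<in> P2 r0" and nu: "\<nu> \<in> P2 r0"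
  shows "\<exists>\<mu>'\<in>P2 r0. Dle_meas D r0 \<mu>' \<mu> \<and> Dle_meas D r0 \<mu>' \<nu>"
proof -
  have r0': "r0 \<ge> 0" using r0 by simp
  obtain \<kappa> where k: "0 < \<kappa>" "\<kappa> < 1" and L: "\<And>\<xi> \<eta> B. \<xi> \<in> Cspace r0 \<Longrightarrow> \<eta> \<in> Cspace r0 \<Longrightarrow>
       (\<forall>\<theta>\<in>{-r0..0}. \<forall>j. \<bar>\<xi> \<theta> $ j - \<eta> \<theta> $ j\<bar> \<le> B) \<Longrightarrow> norm (D \<xi> - D \<eta>) \<le> \<kappa> * B"
    using D_lip[OF a5 r0'] by metis
  define K where "K = (1 + \<kappa>) / (1 - \<kappa>)"
  have K1: "K \<ge> 1" unfolding K_def using k by (simp add: field_simps)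
  have pm: "prob_space \<mu>" and sm: "sets \<mu> = sets (Cborel r0)"
    and mom_m: "(\<integral>\<^sup>+ f. ennreal ((supnorm r0 f)\<^sup>2) \<partial>\<mu>) < \<infinity>" using mu by (auto simp: P2_def)
  have pn: "prob_space \<nu>" and sn: "sets \<nu> = sets (Cborel r0)"
    and mom_n: "(\<integral>\<^sup>+ f. ennreal ((supnorm r0 f)\<^sup>2) \<partial>\<nu>) < \<infinity>" using nu by (auto simp: P2_def)
  interpret m: prob_space \<mu> by (rule pm)
  interpret n: prob_space \<nu> by (rule pn)
  interpret pp: pair_prob_space \<mu> \<nu> ..
  define P where "P = \<mu> \<Otimes>\<^sub>M \<nu>"
  have pP: "prob_space P" unfolding P_def by (rule pp.prob_space_axioms)
  have spm: "space \<mu> = Cspace r0" using sets_eq_imp_space_eq[OF sm] by simp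
  have spn: "space \<nu> = Cspace r0" using sets_eq_imp_space_eq[OF sn] by simp
  have spP: "space P = Cspace r0 \<times> Cspace r0" unfolding P_def space_pair_measure spm spn ..
  have snm[measurable]: "supnorm r0 \<in> borel_measurable \<mu>" by (rule supnorm_measurable[OF sm r0'])
  have snn[measurable]: "supnorm r0 \<in> borel_measurable \<nu>" by (rule supnorm_measurable[OF sn r0'])
  define R where "R p = max (supnorm r0 (fst p)) (supnorm r0 (snd p))" for p :: "(real \<Rightarrow> real^'n) \<times> (real \<Rightarrow> real^'n)"
  have Rm: "R \<in> borel_measurable P" unfolding R_def P_def by measurable
  define G where "G p = (low r0 K (R p) :: real \<Rightarrow> real^'n)" for p
  have Gm: "G \<in> measurable P (Cborel r0)"
    unfolding G_def by (rule measurable_compose[OF Rm low_measurable[OF r0']])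
  have fstm: "fst \<in> measurable P \<mu>" unfolding P_def by (rule measurable_fst)
  have sndm: "snd \<in> measurable P \<nu>" unfolding P_def by (rule measurable_snd)
  have d1: "distr P \<mu> fst = \<mu>" unfolding P_def by (rule n.distr_pair_fst)
  have d2: "distr P \<nu> snd = \<nu>" unfolding P_def by (rule distr_pair_snd'[OF pm pn])
  have le1: "\<forall>p\<in>space P. Dle D r0 (G p) (fst p)"
    unfolding G_def K_def spP using low_Dle[OF r0' k L] by (auto simp: R_def)
  have le2: "\<forall>p\<in>space P. Dle D r0 (G p) (snd p)"
    unfolding G_def K_def spP using low_Dle[OF r0' k L] by (auto simp: R_def)
  define \<mu>' where "\<mu>' = distr P (Cborel r0) G"
  have "\<mu>' \<in> P2 r0"
  proof -
    have ps: "prob_space \<mu>'" unfolding \<mu>'_def by (rule prob_space.prob_space_distr[OF pP Gm])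
    have sd: "sets \<mu>' = sets (Cborel r0)" by (simp add: \<mu>'_def)
    have snd'[measurable]: "supnorm r0 \<in> borel_measurable \<mu>'" by (rule supnorm_measurable[OF sd r0'])
    define C where "C = real CARD('n) * K"
    have C0: "C \<ge> 0" unfolding C_def using K1 by simp
    have low0: "(low r0 K 0 :: real \<Rightarrow> real^'n) = (\<lambda>_. 0)"
      unfolding low_def using shift_0[OF zero_Cspace] by simp
    have bnd: "(supnorm r0 (G p))\<^sup>2 \<le> C\<^sup>2 * ((supnorm r0 (fst p))\<^sup>2 + (supnorm r0 (snd p))\<^sup>2)"
      if p: "p \<in> space P" for p
    proof -
      have fp: "fst p \<in> Cspace r0" and sp: "snd p \<in> Cspace r0" using p unfolding spP by (simp_all add: mem_Times_iff)
      have a0: "supnorm r0 (fst p) \<ge> 0" by (rule supnorm_nonneg[OF fp r0'])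
      have b0: "supnorm r0 (snd p) \<ge> 0" by (rule supnorm_nonneg[OF sp r0'])
      have R0: "R p \<ge> 0" using a0 by (simp add: R_def)
      have "supnorm r0 (\<lambda>\<theta>. (low r0 K (R p) :: real \<Rightarrow> real^'n) \<theta> - low r0 K 0 \<theta>) \<le> real CARD('n) * \<bar>K\<bar> * \<bar>R p - 0\<bar>"
        by (rule supnorm_low_diff[OF r0'])
      then have s1: "supnorm r0 (G p) \<le> C * R p" using low0 R0 K1 by (simp add: G_def C_def)
      have s0: "supnorm r0 (G p) \<ge> 0" unfolding G_def by (rule supnorm_nonneg[OF low_Cspace r0'])
      have "(supnorm r0 (G p))\<^sup>2 \<le> (C * R p)\<^sup>2" using s1 s0 by (rule power_mono)
      also have "\<dots> = C\<^sup>2 * (R p)\<^sup>2" by (simp add: power_mult_distrib)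
      also have "(R p)\<^sup>2 \<le> (supnorm r0 (fst p))\<^sup>2 + (supnorm r0 (snd p))\<^sup>2"
        unfolding R_def max_def by (simp add: add_increasing add_increasing2)
      then have "C\<^sup>2 * (R p)\<^sup>2 \<le> C\<^sup>2 * ((supnorm r0 (fst p))\<^sup>2 + (supnorm r0 (snd p))\<^sup>2)"
        by (rule mult_left_mono) simp
      finally show ?thesis .
    qed
    have "(\<integral>\<^sup>+ f. ennreal ((supnorm r0 f)\<^sup>2) \<partial>\<mu>') = (\<integral>\<^sup>+ p. ennreal ((supnorm r0 (G p))\<^sup>2) \<partial>P)"
      unfolding \<mu>'_def by (rule nn_integral_distr[OF Gm]) (use snd' in \<open>simp add: \<mu>'_def\<close>)
    also have "\<dots> \<le> (\<integral>\<^sup>+ p. ennreal (C\<^sup>2) * (ennreal ((supnorm r0 (fst p))\<^sup>2) + ennreal ((supnorm r0 (snd p))\<^sup>2)) \<partial>P)"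
      by (rule nn_integral_mono) (use bnd in \<open>simp add: ennreal_mult[symmetric] ennreal_plus[symmetric] del: ennreal_plus\<close>)
    also have "\<dots> = ennreal (C\<^sup>2) * ((\<integral>\<^sup>+ p. ennreal ((supnorm r0 (fst p))\<^sup>2) \<partial>P) + (\<integral>\<^sup>+ p. ennreal ((supnorm r0 (snd p))\<^sup>2) \<partial>P))"
      unfolding P_def by (simp add: nn_integral_cmult nn_integral_add)
    also have "(\<integral>\<^sup>+ p. ennreal ((supnorm r0 (fst p))\<^sup>2) \<partial>P) = (\<integral>\<^sup>+ f. ennreal ((supnorm r0 f)\<^sup>2) \<partial>\<mu>)"
    proof -
      have mm: "(\<lambda>f. ennreal ((supnorm r0 f)\<^sup>2)) \<in> borel_measurable \<mu>" by measurable
      have "(\<integral>\<^sup>+ f. ennreal ((supnorm r0 f)\<^sup>2) \<partial>distr P \<mu> fst) = (\<integral>\<^sup>+ p. ennreal ((supnorm r0 (fst p))\<^sup>2) \<partial>P)"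
        by (rule nn_integral_distr[OF fstm]) (unfold d1, rule mm)
      then show ?thesis by (simp add: d1)
    qed
    also have "(\<integral>\<^sup>+ p. ennreal ((supnorm r0 (snd p))\<^sup>2) \<partial>P) = (\<integral>\<^sup>+ f. ennreal ((supnorm r0 f)\<^sup>2) \<partial>\<nu>)"
    proof -
      have mm: "(\<lambda>f. ennreal ((supnorm r0 f)\<^sup>2)) \<in> borel_measurable \<nu>" by measurable
      have "(\<integral>\<^sup>+ f. ennreal ((supnorm r0 f)\<^sup>2) \<partial>distr P \<nu> snd) = (\<integral>\<^sup>+ p. ennreal ((supnorm r0 (snd p))\<^sup>2) \<partial>P)"
        by (rule nn_integral_distr[OF sndm]) (unfold d2, rule mm)
      then show ?thesis by (simp add: d2)
    qed
    finally have le: "(\<integral>\<^sup>+ f. ennreal ((supnorm r0 f)\<^sup>2) \<partial>\<mu>') \<le> ennreal (C\<^sup>2) * ((\<integral>\<^sup>+ f. ennreal ((supnorm r0 f)\<^sup>2) \<partial>\<mu>) + (\<integral>\<^sup>+ f. ennreal ((supnorm r0 f)\<^sup>2) \<partial>\<nu>))" .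
    have "ennreal (C\<^sup>2) * ((\<integral>\<^sup>+ f. ennreal ((supnorm r0 f)\<^sup>2) \<partial>\<mu>) + (\<integral>\<^sup>+ f. ennreal ((supnorm r0 f)\<^sup>2) \<partial>\<nu>)) < \<infinity>"
      using mom_m mom_n by (simp add: ennreal_mult_less_top)
    with le have "(\<integral>\<^sup>+ f. ennreal ((supnorm r0 f)\<^sup>2) \<partial>\<mu>') < \<infinity>" by (rule le_less_trans)
    then show ?thesis using ps sd unfolding P2_def by blast
  qed
  moreover have "Dle_meas D r0 \<mu>' \<mu>"
    unfolding \<mu>'_def by (rule marginal_Dle[OF pP Gm fstm d1 sm le1])
  moreover have "Dle_meas D r0 \<mu>' \<nu>"
    unfolding \<mu>'_def by (rule marginal_Dle[OF pP Gm sndm d2 sn le2])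
  ultimately show ?thesis by blast
qed


theorem lemma4p3:
  fixes D :: "(real \<Rightarrow> real^'n) \<Rightarrow> real^'n" and r0 :: real
  assumes "r0 > 0" and "A1 D r0" and "A5 D r0"
  shows "(\<forall>i. \<forall>\<xi>\<in>Cspace r0. \<forall>\<eta>\<in>Cspace r0.
            \<xi> 0 $ i - D \<xi> $ i = \<eta> 0 $ i - D \<eta> $ i \<longrightarrow>
            (\<exists>\<zeta>\<in>Cspace r0. Cle r0 \<zeta> (Cmin \<xi> \<eta>) \<and>
               \<zeta> 0 $ i - D \<zeta> $ i = \<xi> 0 $ i - D \<xi> $ i \<and>
               \<zeta> 0 $ i - D \<zeta> $ i = \<eta> 0 $ i - D \<eta> $ i))
      \<and> (\<forall>\<mu>\<in>P2 r0. \<forall>\<nu>\<in>P2 r0. \<exists>\<mu>'\<in>P2 r0. Dle_meas D r0 \<mu>' \<mu> \<and> Dle_meas D r0 \<mu>' \<nu>)"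
  using part1[OF assms] part2[OF assms(1,3)] by blast

end
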